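(* Let $S$ be a semilattice. Then the Banach algebra $\ell^1(S)$ is AMNM.
   Context: A semilattice is a commutative semigroup in which every element is idempotent. $\ell^1(S)$ is the Banach space of functions $a:S\to\mathbb C$ with $\|a\|=\sum_{s\in S}|a(s)|<\infty$, made into a Banach algebra by convolution, i.e. the bilinear extension of $\delta_x*\delta_y=\delta_{xy}$. For Banach algebras $A,B$ and a bounded linear map $T:A\to B$, the multiplicative defect is $\operatorname{def}(T)=\sup\{\|T(xy)-T(x)T(y)\|:\ x,y\in A,\ \|x\|\le1,\ \|y\|\le1\}$. $\operatorname{Mult}(A,B)$ denotes the set of bounded linear multiplicative maps $A\to B$ (including the zero map). A Banach algebra $A$ is called AMNM if for every $\varepsilon>0$ there is $\delta>0$ such that every $\psi\in A^*$ with $\operatorname{def}(\psi)\le\delta$ satisfies $\operatorname{dist}_{A^*}(\psi,\operatorname{Mult}(A,\mathbb C))\le\varepsilon$. *)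

theory Defs
  imports "HOL-Analysis.Analysis"
begin

text \<open>The semilattice is a type 'a with an operation f satisfying the library
locale semilattice (associative, commutative, idempotent).\<close>

definition l1 :: "('a \<Rightarrow> complex) set" where
  "l1 = {a. (\<lambda>s. norm (a s)) summable_on UNIV}"

definition l1_norm :: "('a \<Rightarrow> complex) \<Rightarrow> real" where
  "l1_norm a = (\<Sum>\<^sub>\<infinity>s. norm (a s))"

text \<open>Convolution: bilinear extension of delta_x * delta_y = delta_(xy).\<close>
definition conv :: "('a \<Rightarrow> 'a \<Rightarrow> 'a) \<Rightarrow> ('a \<Rightarrow> complex) \<Rightarrow> ('a \<Rightarrow> complex) \<Rightarrow> 'a \<Rightarrow> complex" where
  "conv f a b t = (\<Sum>\<^sub>\<infinity>(x,y)\<in>{(x,y). f x y = t}. a x * b y)"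

definition l1_dual :: "(('a \<Rightarrow> complex) \<Rightarrow> complex) set" where
  "l1_dual = {\<psi>. (\<forall>a\<in>l1. \<forall>b\<in>l1. \<psi> (\<lambda>s. a s + b s) = \<psi> a + \<psi> b)
                 \<and> (\<forall>a\<in>l1. \<forall>c. \<psi> (\<lambda>s. c * a s) = c * \<psi> a)
                 \<and> (\<exists>C. \<forall>a\<in>l1. norm (\<psi> a) \<le> C * l1_norm a)}"

definition dual_norm :: "(('a \<Rightarrow> complex) \<Rightarrow> complex) \<Rightarrow> real" where
  "dual_norm \<psi> = Sup {norm (\<psi> a) | a. a \<in> l1 \<and> l1_norm a \<le> 1}"

definition mult_defect :: "('a \<Rightarrow> 'a \<Rightarrow> 'a) \<Rightarrow> (('a \<Rightarrow> complex) \<Rightarrow> complex) \<Rightarrow> real" where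
  "mult_defect f \<psi> = Sup {norm (\<psi> (conv f a b) - \<psi> a * \<psi> b) | a b.
       a \<in> l1 \<and> b \<in> l1 \<and> l1_norm a \<le> 1 \<and> l1_norm b \<le> 1}"

text \<open>Mult(l1(S), C): bounded linear multiplicative functionals (incl. zero).\<close>
definition l1_mult :: "('a \<Rightarrow> 'a \<Rightarrow> 'a) \<Rightarrow> (('a \<Rightarrow> complex) \<Rightarrow> complex) set" where
  "l1_mult f = {\<phi>\<in>l1_dual. \<forall>a\<in>l1. \<forall>b\<in>l1. \<phi> (conv f a b) = \<phi> a * \<phi> b}"

definition dist_mult :: "('a \<Rightarrow> 'a \<Rightarrow> 'a) \<Rightarrow> (('a \<Rightarrow> complex) \<Rightarrow> complex) \<Rightarrow> real" where
  "dist_mult f \<psi> = Inf {dual_norm (\<lambda>a. \<psi> a - \<phi> a) | \<phi>. \<phi> \<in> l1_mult f}"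

definition l1_AMNM :: "('a \<Rightarrow> 'a \<Rightarrow> 'a) \<Rightarrow> bool" where
  "l1_AMNM f \<longleftrightarrow> (\<forall>\<epsilon>>0. \<exists>\<delta>>0. \<forall>\<psi>\<in>l1_dual. mult_defect f \<psi> \<le> \<delta> \<longrightarrow> dist_mult f \<psi> \<le> \<epsilon>)"

end

theory Submission
  imports Defs
begin

lemma l1_iff: "a \<in> l1 \<longleftrightarrow> (a::'a\<Rightarrow>complex) summable_on UNIV"
  unfolding l1_def using summable_on_iff_abs_summable_on_complex by auto

lemma prod_summable_norm:
  fixes u v :: "'a \<Rightarrow> complex"
  assumes u: "u summable_on UNIV" and v: "v summable_on UNIV"
  shows "(\<lambda>p. norm (u (fst p) * v (snd p))) summable_on UNIV"
proof -
  have un: "(\<lambda>x. norm (u x)) summable_on UNIV" and vn: "(\<lambda>x. norm (v x)) summable_on UNIV"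
    using u v summable_on_iff_abs_summable_on_complex by blast+
  have "(\<lambda>p. norm (u (fst p) * v (snd p))) summable_on Sigma UNIV (\<lambda>_. UNIV)"
  proof (rule summable_on_SigmaI[where g="\<lambda>x. norm (u x) * infsum (\<lambda>y. norm (v y)) UNIV"])
    fix x :: 'a
    show "((\<lambda>y. norm (u (fst (x, y)) * v (snd (x, y)))) has_sum norm (u x) * infsum (\<lambda>y. norm (v y)) UNIV) UNIV"
      using has_sum_cmult_right[OF has_sum_infsum[OF vn], of "norm (u x)"] by (simp add: norm_mult)
  next
    show "(\<lambda>x. norm (u x) * infsum (\<lambda>y. norm (v y)) UNIV) summable_on UNIV"
      using summable_on_cmult_left[OF un] by simp
  qed auto
  then show ?thesis by simp
qed

lemma prod_summable:
  fixes u v :: "'a \<Rightarrow> complex"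
  assumes u: "u summable_on UNIV" and v: "v summable_on UNIV"
  shows "(\<lambda>p. u (fst p) * v (snd p)) summable_on UNIV"
  using prod_summable_norm[OF u v] summable_on_iff_abs_summable_on_complex by blast

lemma prod_infsum:
  fixes u v :: "'a \<Rightarrow> complex"
  assumes u: "u summable_on UNIV" and v: "v summable_on UNIV"
  shows "infsum (\<lambda>p. u (fst p) * v (snd p)) UNIV = infsum u UNIV * infsum v UNIV"
proof -
  have s: "(\<lambda>p. u (fst p) * v (snd p)) summable_on Sigma UNIV (\<lambda>_. UNIV)"
    using prod_summable[OF u v] by simp
  have "infsum (\<lambda>p. u (fst p) * v (snd p)) (Sigma UNIV (\<lambda>_. UNIV))
      = infsum (\<lambda>x. infsum (\<lambda>y. u x * v y) UNIV) UNIV"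
    using infsum_Sigma_banach[OF s] by simp
  also have "\<dots> = infsum (\<lambda>x. u x * infsum v UNIV) UNIV"
    by (simp add: infsum_cmult_right')
  also have "\<dots> = infsum u UNIV * infsum v UNIV"
    by (simp add: infsum_cmult_left')
  finally show ?thesis by simp
qed

lemma fiber_sum:
  fixes h :: "'b \<Rightarrow> 'c::banach" and k :: "'b \<Rightarrow> 'd"
  assumes h: "h summable_on UNIV"
  shows "(\<lambda>t. infsum h {p. k p = t}) summable_on UNIV"
    and "infsum (\<lambda>t. infsum h {p. k p = t}) UNIV = infsum h UNIV"
proof -
  define H where "H = (\<lambda>q::'d\<times>'b. h (snd q))"
  have inj: "inj_on (\<lambda>p. (k p, p)) UNIV" by (auto simp: inj_on_def)
  have img: "(\<lambda>p. (k p, p)) ` UNIV = Sigma UNIV (\<lambda>t. {p. k p = t})" by auto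
  have s: "H summable_on Sigma UNIV (\<lambda>t. {p. k p = t})"
    using summable_on_reindex[OF inj, of H] h img by (simp add: H_def o_def)
  have e: "infsum H (Sigma UNIV (\<lambda>t. {p. k p = t})) = infsum h UNIV"
    using infsum_reindex[OF inj, of H] img by (simp add: H_def o_def)
  have fs: "\<And>t. (\<lambda>p. H (t, p)) summable_on {p. k p = t}"
    using summable_on_subset_banach[OF h] by (simp add: H_def)
  show "(\<lambda>t. infsum h {p. k p = t}) summable_on UNIV"
    using summable_on_SigmaD[OF s fs] by (simp add: H_def)
  show "infsum (\<lambda>t. infsum h {p. k p = t}) UNIV = infsum h UNIV"
    using infsum_Sigma_banach[OF s] e by (simp add: H_def)
qed


lemma prod_infsum_norm:
  fixes u v :: "'a \<Rightarrow> complex"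
  assumes u: "u summable_on UNIV" and v: "v summable_on UNIV"
  shows "infsum (\<lambda>p. norm (u (fst p) * v (snd p))) UNIV = infsum (\<lambda>x. norm (u x)) UNIV * infsum (\<lambda>x. norm (v x)) UNIV"
proof -
  have s: "(\<lambda>p. norm (u (fst p) * v (snd p))) summable_on Sigma UNIV (\<lambda>_. UNIV)"
    using prod_summable_norm[OF u v] by simp
  have "infsum (\<lambda>p. norm (u (fst p) * v (snd p))) (Sigma UNIV (\<lambda>_. UNIV))
      = infsum (\<lambda>x. infsum (\<lambda>y. norm (u x) * norm (v y)) UNIV) UNIV"
    using infsum_Sigma_banach[OF s] by (simp add: norm_mult)
  also have "\<dots> = infsum (\<lambda>x. norm (u x) * infsum (\<lambda>y. norm (v y)) UNIV) UNIV"
    by (simp add: infsum_cmult_right')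
  also have "\<dots> = infsum (\<lambda>x. norm (u x)) UNIV * infsum (\<lambda>y. norm (v y)) UNIV"
    by (simp add: infsum_cmult_left')
  finally show ?thesis by simp
qed

lemma conv_eq: "conv f a b t = infsum (\<lambda>p. a (fst p) * b (snd p)) {p. case_prod f p = t}"
proof -
  have "{(x,y). f x y = t} = {p. case_prod f p = t}" by auto
  moreover have "(\<lambda>(x,y). a x * b y) = (\<lambda>p. a (fst p) * b (snd p))" by auto
  ultimately show ?thesis unfolding conv_def by simp
qed

lemma conv_l1:
  assumes a: "a \<in> l1" and b: "b \<in> l1"
  shows "conv f a b \<in> l1" and "l1_norm (conv f a b) \<le> l1_norm a * l1_norm b"
proof -
  define h where "h = (\<lambda>p. a (fst p) * b (snd p))"
  have as: "a summable_on UNIV" and bs: "b summable_on UNIV" using a b l1_iff by auto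
  have hs: "h summable_on UNIV" unfolding h_def using prod_summable[OF as bs] .
  have hn: "(\<lambda>p. norm (h p)) summable_on UNIV" unfolding h_def using prod_summable_norm[OF as bs] .
  have ce: "conv f a b = (\<lambda>t. infsum h {p. case_prod f p = t})"
    by (auto simp: conv_eq h_def)
  show "conv f a b \<in> l1" unfolding ce l1_iff by (rule fiber_sum(1)[OF hs])
  have cs: "(\<lambda>t. norm (conv f a b t)) summable_on UNIV"
    unfolding ce by (metis fiber_sum(1)[OF hs] summable_on_iff_abs_summable_on_complex)
  have bnd: "norm (conv f a b t) \<le> infsum (\<lambda>p. norm (h p)) {p. case_prod f p = t}" for t
    unfolding ce by (rule norm_infsum_bound, rule summable_on_subset_banach[OF hn]) auto
  have "l1_norm (conv f a b) \<le> infsum (\<lambda>t. infsum (\<lambda>p. norm (h p)) {p. case_prod f p = t}) UNIV"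
    unfolding l1_norm_def by (rule infsum_mono[OF cs fiber_sum(1)[OF hn] bnd])
  also have "\<dots> = infsum (\<lambda>p. norm (h p)) UNIV" by (rule fiber_sum(2)[OF hn])
  also have "\<dots> = l1_norm a * l1_norm b"
    unfolding h_def l1_norm_def by (rule prod_infsum_norm[OF as bs])
  finally show "l1_norm (conv f a b) \<le> l1_norm a * l1_norm b" .
qed

lemma l1_norm_nonneg: "0 \<le> l1_norm a"
  unfolding l1_norm_def by (rule infsum_nonneg) auto


definition chiF :: "('a \<Rightarrow> complex) \<Rightarrow> ('a \<Rightarrow> complex) \<Rightarrow> complex" where
  "chiF ch a = infsum (\<lambda>s. a s * ch s) UNIV"

lemma phi_summable:
  fixes ch a :: "'a \<Rightarrow> complex"
  assumes chi: "\<And>x. norm (ch x) \<le> 1" and a: "a \<in> l1"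
  shows "(\<lambda>s. a s * ch s) summable_on UNIV"
proof -
  have "(\<lambda>s. norm (a s)) summable_on UNIV" using a unfolding l1_def by auto
  then have "(\<lambda>s. norm (a s * ch s)) summable_on UNIV"
    by (rule Infinite_Sum.abs_summable_on_comparison_test'[where g="\<lambda>s. norm (a s)"])
       (simp add: norm_mult, metis chi mult_left_le norm_ge_zero)
  then show ?thesis using summable_on_iff_abs_summable_on_complex by blast
qed

lemma phi_bound:
  fixes ch a :: "'a \<Rightarrow> complex"
  assumes chi: "\<And>x. norm (ch x) \<le> 1" and a: "a \<in> l1"
  shows "norm (chiF ch a) \<le> l1_norm a"
proof -
  have sn: "(\<lambda>s. norm (a s * ch s)) summable_on UNIV"
    using phi_summable[of ch a, OF chi a] summable_on_iff_abs_summable_on_complex[of "\<lambda>s. a s * ch s" UNIV] by simp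
  have an: "(\<lambda>s. norm (a s)) summable_on UNIV" using a unfolding l1_def by auto
  have "norm (chiF ch a) \<le> infsum (\<lambda>s. norm (a s * ch s)) UNIV"
    unfolding chiF_def by (rule norm_infsum_bound[OF sn])
  also have "\<dots> \<le> l1_norm a" unfolding l1_norm_def
    by (rule infsum_mono[OF sn an]) (simp add: norm_mult, metis chi mult_left_le norm_ge_zero)
  finally show ?thesis .
qed

lemma phi_dual:
  fixes ch :: "'a \<Rightarrow> complex"
  assumes chi: "\<And>x. norm (ch x) \<le> 1"
  shows "chiF ch \<in> l1_dual"
  unfolding l1_dual_def
proof (intro CollectI conjI ballI allI)
  fix a b :: "'a \<Rightarrow> complex" assume a: "a \<in> l1" and b: "b \<in> l1"
  show "chiF ch (\<lambda>s. a s + b s) = chiF ch a + chiF ch b"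
    unfolding chiF_def using infsum_add[OF phi_summable[of ch a, OF chi a] phi_summable[of ch b, OF chi b]]
    by (simp add: distrib_right)
next
  fix a :: "'a \<Rightarrow> complex" and c assume a: "a \<in> l1"
  show "chiF ch (\<lambda>s. c * a s) = c * chiF ch a"
    unfolding chiF_def by (simp add: mult.assoc infsum_cmult_right')
next
  show "\<exists>C. \<forall>a\<in>l1. norm (chiF ch a) \<le> C * l1_norm a"
    using phi_bound[OF chi] by (intro exI[of _ 1]) auto
qed

lemma phi_mult:
  fixes ch :: "'a \<Rightarrow> complex"
  assumes chi: "\<And>x. norm (ch x) \<le> 1" and m: "\<And>x y. ch (f x y) = ch x * ch y"
  shows "chiF ch \<in> l1_mult f"
  unfolding l1_mult_def
proof (intro CollectI conjI ballI phi_dual[OF chi])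
  fix a b :: "'a \<Rightarrow> complex" assume a: "a \<in> l1" and b: "b \<in> l1"
  define u where "u = (\<lambda>s. a s * ch s)"
  define v where "v = (\<lambda>s. b s * ch s)"
  have us: "u summable_on UNIV" unfolding u_def by (rule phi_summable[of ch a, OF chi a])
  have vs: "v summable_on UNIV" unfolding v_def by (rule phi_summable[of ch b, OF chi b])
  define h where "h = (\<lambda>p. u (fst p) * v (snd p))"
  have hs: "h summable_on UNIV" unfolding h_def by (rule prod_summable[OF us vs])
  have "conv f a b t * ch t = infsum h {p. case_prod f p = t}" for t
  proof -
    have "conv f a b t * ch t = infsum (\<lambda>p. a (fst p) * b (snd p) * ch t) {p. case_prod f p = t}"
      unfolding conv_eq by (simp add: infsum_cmult_left')
    also have "\<dots> = infsum h {p. case_prod f p = t}"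
      by (rule infsum_cong) (auto simp: h_def u_def v_def m)
    finally show ?thesis .
  qed
  then have "chiF ch (conv f a b) = infsum (\<lambda>t. infsum h {p. case_prod f p = t}) UNIV"
    unfolding chiF_def by simp
  also have "\<dots> = infsum h UNIV" by (rule fiber_sum(2)[OF hs])
  also have "\<dots> = chiF ch a * chiF ch b"
    unfolding h_def prod_infsum[OF us vs] by (simp add: chiF_def u_def v_def)
  finally show "chiF ch (conv f a b) = chiF ch a * chiF ch b" .
qed


lemma finsupp_l1:
  fixes g :: "'a \<Rightarrow> complex"
  assumes "finite F" "\<And>s. s \<notin> F \<Longrightarrow> g s = 0"
  shows "g \<in> l1"
proof -
  have "g summable_on F" using assms(1) by simp
  then have "g summable_on UNIV"
    using summable_on_cong_neutral[of F UNIV g g] assms(2) by auto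
  then show ?thesis using l1_iff by blast
qed

lemma sum_le_l1_norm:
  fixes a :: "'a \<Rightarrow> complex"
  assumes a: "a \<in> l1" and F: "finite F"
  shows "(\<Sum>s\<in>F. norm (a s)) \<le> l1_norm a"
proof -
  have an: "(\<lambda>s. norm (a s)) summable_on UNIV" using a unfolding l1_def by auto
  have "(\<Sum>s\<in>F. norm (a s)) = infsum (\<lambda>s. norm (a s)) F" using F by simp
  also have "\<dots> \<le> l1_norm a" unfolding l1_norm_def
    by (rule infsum_mono2) (use F an in auto)
  finally show ?thesis .
qed

lemma dual_pointwise_bound:
  fixes D :: "('a \<Rightarrow> complex) \<Rightarrow> complex"
  assumes add: "\<And>a b. a\<in>l1 \<Longrightarrow> b\<in>l1 \<Longrightarrow> D (\<lambda>s. a s + b s) = D a + D b"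
  and hom: "\<And>a c. a\<in>l1 \<Longrightarrow> D (\<lambda>s. c * a s) = c * D a"
  and bnd: "\<And>a. a\<in>l1 \<Longrightarrow> norm (D a) \<le> C * l1_norm a"
  and pt: "\<And>x. norm (D (\<lambda>s. if s = x then 1 else 0)) \<le> \<eta>"
  and a: "a \<in> l1"
  shows "norm (D a) \<le> \<eta> * l1_norm a"
proof -
  have an: "(\<lambda>s. norm (a s)) summable_on UNIV" using a unfolding l1_def by auto
  have z: "(\<lambda>s::'a. 0::complex) \<in> l1" by (rule finsupp_l1[of "{}"]) auto
  have D0: "D (\<lambda>s. 0) = 0" using hom[OF z, of 0] by simp
  have dl: "(\<lambda>s. if s = x then 1 else 0 :: complex) \<in> l1" for x
    by (rule finsupp_l1[of "{x}"]) auto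
  have fin: "norm (D (\<lambda>s. if s \<in> F then a s else 0)) \<le> \<eta> * (\<Sum>s\<in>F. norm (a s))"
    if "finite F" for F
    using that
  proof (induction F rule: finite_induct)
    case empty then show ?case by (simp add: D0)
  next
    case (insert x F)
    have e: "(\<lambda>s. if s \<in> insert x F then a s else 0)
        = (\<lambda>s. (if s \<in> F then a s else 0) + a x * (if s = x then 1 else 0))"
      using insert(2) by auto
    have l1F: "(\<lambda>s. if s \<in> F then a s else 0) \<in> l1"
      by (rule finsupp_l1[OF insert(1)]) auto
    have l1x: "(\<lambda>s. a x * (if s = x then 1 else 0)) \<in> l1"
      by (rule finsupp_l1[of "{x}"]) auto
    have "D (\<lambda>s. if s \<in> insert x F then a s else 0)
        = D (\<lambda>s. if s \<in> F then a s else 0) + a x * D (\<lambda>s. if s = x then 1 else 0)"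
      unfolding e add[OF l1F l1x] hom[OF dl] ..
    then have "norm (D (\<lambda>s. if s \<in> insert x F then a s else 0))
        \<le> norm (D (\<lambda>s. if s \<in> F then a s else 0)) + norm (a x) * norm (D (\<lambda>s. if s = x then 1 else 0))"
      using norm_triangle_ineq[of "D (\<lambda>s. if s \<in> F then a s else 0)" "a x * D (\<lambda>s. if s = x then 1 else 0)"]
      by (simp add: norm_mult)
    also have "\<dots> \<le> \<eta> * (\<Sum>s\<in>F. norm (a s)) + norm (a x) * \<eta>"
      using insert(3) pt[of x] by (intro add_mono mult_left_mono) auto
    finally show ?case using insert(1,2) by (simp add: algebra_simps)
  qed
  have main: "norm (D a) \<le> \<eta> * l1_norm a + \<bar>C\<bar> * e" if e: "e > 0" for e
  proof -
    have "\<forall>\<^sub>F G in finite_subsets_at_top UNIV. dist (\<Sum>s\<in>G. norm (a s)) (l1_norm a) < e"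
      using infsum_tendsto[OF an] e unfolding l1_norm_def tendsto_iff by blast
    then obtain F where F: "finite F" and Fe: "dist (\<Sum>s\<in>F. norm (a s)) (l1_norm a) < e"
      unfolding eventually_finite_subsets_at_top by blast
    define aF where "aF = (\<lambda>s. if s \<in> F then a s else 0)"
    define aR where "aR = (\<lambda>s. if s \<in> F then 0 else a s)"
    have aFl: "aF \<in> l1" unfolding aF_def by (rule finsupp_l1[OF F]) auto
    have aRn: "(\<lambda>s. norm (aR s)) summable_on UNIV"
      by (rule Infinite_Sum.abs_summable_on_comparison_test'[OF an]) (auto simp: aR_def)
    have aRl: "aR \<in> l1" using aRn unfolding l1_def by auto
    have aFn: "(\<lambda>s. norm (aF s)) summable_on UNIV"
      using aFl unfolding l1_def by auto
    have "l1_norm a = infsum (\<lambda>s. norm (aF s) + norm (aR s)) UNIV"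
      unfolding l1_norm_def by (rule infsum_cong) (auto simp: aF_def aR_def)
    also have "\<dots> = infsum (\<lambda>s. norm (aF s)) UNIV + l1_norm aR"
      unfolding l1_norm_def by (rule infsum_add[OF aFn aRn])
    also have "infsum (\<lambda>s. norm (aF s)) UNIV = infsum (\<lambda>s. norm (aF s)) F"
      by (rule infsum_cong_neutral) (auto simp: aF_def)
    also have "\<dots> = (\<Sum>s\<in>F. norm (a s))" using F by (simp add: aF_def)
    finally have nR: "l1_norm aR = l1_norm a - (\<Sum>s\<in>F. norm (a s))" by simp
    have le: "(\<Sum>s\<in>F. norm (a s)) \<le> l1_norm a" by (rule sum_le_l1_norm[OF a F])
    have nR2: "l1_norm aR \<le> e" using nR Fe le by (simp add: dist_real_def)
    have "a = (\<lambda>s. aF s + aR s)" by (auto simp: aF_def aR_def)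
    then have "D a = D aF + D aR" using add[OF aFl aRl] by simp
    then have "norm (D a) \<le> norm (D aF) + norm (D aR)" by (simp add: norm_triangle_ineq)
    also have "norm (D aF) \<le> \<eta> * l1_norm a"
    proof -
      have h0: "\<eta> \<ge> 0" using norm_ge_zero[of "D (\<lambda>s. if s = undefined then 1 else 0)"] pt[of undefined] by linarith
      show ?thesis using fin[OF F] mult_left_mono[OF le h0] unfolding aF_def by linarith
    qed
    also have "norm (D aR) \<le> \<bar>C\<bar> * e"
    proof -
      have "norm (D aR) \<le> C * l1_norm aR" by (rule bnd[OF aRl])
      also have "\<dots> \<le> \<bar>C\<bar> * l1_norm aR" using l1_norm_nonneg[of aR] by (simp add: mult_right_mono)
      also have "\<dots> \<le> \<bar>C\<bar> * e" using nR2 by (simp add: mult_left_mono)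
      finally show ?thesis .
    qed
    finally show ?thesis by simp
  qed
  show ?thesis
  proof (rule field_le_epsilon)
    fix e :: real assume e: "0 < e"
    have "norm (D a) \<le> \<eta> * l1_norm a + \<bar>C\<bar> * (e / (\<bar>C\<bar> + 1))"
      using main[of "e / (\<bar>C\<bar> + 1)"] e by simp
    also have "\<bar>C\<bar> * (e / (\<bar>C\<bar> + 1)) \<le> e"
      using e by (simp add: field_simps)
    finally show "norm (D a) \<le> \<eta> * l1_norm a + e" by simp
  qed
qed


lemma real_dichot:
  fixes r q d :: real
  assumes "r \<ge> 0" "q \<ge> 0" "r + q \<ge> 1" "r * q \<le> d" "d \<le> 1/16"
  shows "r \<le> 2*d \<or> q \<le> 2*d"
proof (cases "r \<le> 1/2")
  case True
  then have "q \<ge> 1/2" using assms by linarith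
  then have "r * (1/2) \<le> r * q" using assms(1) by (rule mult_left_mono)
  then show ?thesis using assms by linarith
next
  case False
  show ?thesis
  proof (cases "q \<le> 1/2")
    case True
    then have "r \<ge> 1/2" using assms by linarith
    then have "(1/2) * q \<le> r * q" using assms(2) by (rule mult_right_mono)
    then show ?thesis using assms by linarith
  next
    case F2: False
    have "(1/2) * (1/2) \<le> r * q" using False F2 by (intro mult_mono) auto
    then show ?thesis using assms by linarith
  qed
qed

lemma cplx_dichot:
  fixes z :: complex and d :: real
  assumes "norm (z - z * z) \<le> d" "d \<le> 1/16"
  shows "norm z \<le> 2*d \<or> norm (1 - z) \<le> 2*d"
proof (rule real_dichot)
  have "z - z * z = z * (1 - z)" by (simp add: algebra_simps)
  then show "norm z * norm (1 - z) \<le> d" using assms(1) by (simp add: norm_mult)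
  have "norm (z + (1 - z)) \<le> norm z + norm (1 - z)" by (rule norm_triangle_ineq)
  then show "norm z + norm (1 - z) \<ge> 1" by simp
qed (use assms in auto)

lemma chi_mult_aux:
  fixes P Q R c1 c2 c3 :: complex and d :: real
  assumes c: "c1 \<in> {0,1}" "c2 \<in> {0,1}" "c3 \<in> {0,1}"
    and h: "norm (P - c3) \<le> 2*d" "norm (Q - c1) \<le> 2*d" "norm (R - c2) \<le> 2*d"
      "norm (P - Q * R) \<le> d" "d \<le> 1/16"
  shows "c3 = c1 * c2"
proof (rule ccontr)
  assume ne: "c3 \<noteq> c1 * c2"
  have n1: "norm (c3 - c1 * c2) = 1" using c ne by auto
  have d0: "d \<ge> 0" using h(4) norm_ge_zero order_trans by blast
  have nc1: "norm c1 \<le> 1" using c by auto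
  have nR: "norm R \<le> 1 + 2*d"
  proof -
    have "norm R \<le> norm (R - c2) + norm c2" using norm_triangle_ineq[of "R - c2" c2] by simp
    moreover have "norm c2 \<le> 1" using c by auto
    ultimately show ?thesis using h(3) by linarith
  qed
  have "Q * R - c1 * c2 = (Q - c1) * R + c1 * (R - c2)" by (simp add: algebra_simps)
  then have "norm (Q * R - c1 * c2) \<le> norm (Q - c1) * norm R + norm c1 * norm (R - c2)"
    by (metis norm_mult norm_triangle_ineq)
  also have "\<dots> \<le> (2*d) * (1 + 2*d) + 1 * (2*d)"
    using h nR nc1 d0 by (intro add_mono mult_mono) auto
  finally have A: "norm (Q * R - c1 * c2) \<le> (2*d) * (1 + 2*d) + 1 * (2*d)" .
  have "c3 - c1 * c2 = (c3 - P) + (P - Q * R) + (Q * R - c1 * c2)" by simp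
  then have "norm (c3 - c1 * c2) \<le> norm (c3 - P) + norm (P - Q * R) + norm (Q * R - c1 * c2)"
    by (metis norm_triangle_ineq order_trans add_right_mono)
  moreover have "norm (c3 - P) = norm (P - c3)" by (rule norm_minus_commute)
  moreover have "(2*d) * (1 + 2*d) \<le> (2*d) * (1 + 1/8)" using d0 h(5) by (intro mult_left_mono) auto
  ultimately have "1 \<le> 2*d + d + (2*d) * (1 + 1/8) + 2*d" using n1 h A by linarith
  moreover have "(2*d) * (1 + 1/8) = (9/4) * d" by simp
  ultimately show False using h(5) by linarith
qed

lemma delta_l1: "(\<lambda>s. if s = x then 1 else 0 :: complex) \<in> l1"
  by (rule finsupp_l1[of "{x}"]) auto

lemma delta_norm: "l1_norm (\<lambda>s. if s = x then 1 else 0 :: complex) = 1"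
proof -
  have "l1_norm (\<lambda>s. if s = x then 1 else 0 :: complex) = infsum (\<lambda>s. norm (if s = x then 1 else 0 :: complex)) {x}"
    unfolding l1_norm_def by (rule infsum_cong_neutral) auto
  then show ?thesis by simp
qed

lemma infsum_indicator_point:
  "infsum (\<lambda>p. if p = c then 1 else 0 :: complex) S = (if c \<in> S then 1 else 0)"
proof (cases "c \<in> S")
  case True
  have "infsum (\<lambda>p. if p = c then 1 else 0 :: complex) S = infsum (\<lambda>p. if p = c then 1 else 0 :: complex) {c}"
    by (rule infsum_cong_neutral) (use True in auto)
  then show ?thesis using True by simp
next
  case False
  then show ?thesis by (intro trans[OF infsum_0]) auto
qed

lemma conv_delta:
  "conv f (\<lambda>s. if s = x then 1 else 0) (\<lambda>s. if s = y then 1 else 0) = (\<lambda>s. if s = f x y then 1 else 0)"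
proof
  fix t
  have "(\<lambda>p. (if fst p = x then 1 else 0) * (if snd p = y then 1 else 0 :: complex)) = (\<lambda>p. if p = (x,y) then 1 else 0)"
    by (auto simp: prod_eq_iff)
  then show "conv f (\<lambda>s. if s = x then 1 else 0) (\<lambda>s. if s = y then 1 else 0) t = (if t = f x y then 1 else 0)"
    unfolding conv_eq by (simp add: infsum_indicator_point)
qed

lemma dual_bounded:
  assumes "\<psi> \<in> l1_dual"
  obtains K where "K \<ge> 0" "\<And>a. a \<in> l1 \<Longrightarrow> norm (\<psi> a) \<le> K * l1_norm a"
proof -
  have "\<exists>C. \<forall>a\<in>l1. norm (\<psi> a) \<le> C * l1_norm a"
    using assms unfolding l1_dual_def by blast
  then obtain C where C: "\<And>a. a \<in> l1 \<Longrightarrow> norm (\<psi> a) \<le> C * l1_norm a" by blast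
  show ?thesis
  proof (rule that[of "\<bar>C\<bar>"])
    fix a :: "'a \<Rightarrow> complex" assume a: "a \<in> l1"
    show "norm (\<psi> a) \<le> \<bar>C\<bar> * l1_norm a"
      using C[OF a] mult_right_mono[OF abs_ge_self[of C] l1_norm_nonneg[of a]] by linarith
  qed simp
qed

lemma dual_norm_props:
  fixes D :: "('a \<Rightarrow> complex) \<Rightarrow> complex"
  assumes "\<And>a. a \<in> l1 \<Longrightarrow> l1_norm a \<le> 1 \<Longrightarrow> norm (D a) \<le> K"
  shows "0 \<le> dual_norm D" "dual_norm D \<le> K"
proof -
  let ?S = "{norm (D a) | a. a \<in> l1 \<and> l1_norm a \<le> 1}"
  have z: "(\<lambda>s::'a. 0::complex) \<in> l1" by (rule finsupp_l1[of "{}"]) auto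
  have zn: "l1_norm (\<lambda>s::'a. 0::complex) = 0" unfolding l1_norm_def by simp
  have mem: "norm (D (\<lambda>s. 0)) \<in> ?S" using z zn by force
  have bdd: "bdd_above ?S" using assms by (auto intro!: bdd_aboveI[of _ K])
  have "norm (D (\<lambda>s. 0)) \<le> Sup ?S" by (rule cSup_upper[OF mem bdd])
  then show "0 \<le> dual_norm D" unfolding dual_norm_def using norm_ge_zero order_trans by blast
  show "dual_norm D \<le> K" unfolding dual_norm_def
    by (rule cSup_least) (use mem assms in auto)
qed


theorem theoremt:
  fixes f :: "'a \<Rightarrow> 'a \<Rightarrow> 'a"
  assumes "semilattice f"
  shows "l1_AMNM f"
  unfolding l1_AMNM_def
proof (intro allI impI)
  have idem: "\<And>x. f x x = x" using semilattice.idem[OF assms] .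
  fix \<epsilon> :: real assume e: "\<epsilon> > 0"
  define \<delta> where "\<delta> = min (\<epsilon>/2) (1/16)"
  have d0: "\<delta> > 0" and d1: "\<delta> \<le> 1/16" and d2: "2 * \<delta> \<le> \<epsilon>" using e by (auto simp: \<delta>_def)
  show "\<exists>\<delta>>0. \<forall>\<psi>\<in>l1_dual. mult_defect f \<psi> \<le> \<delta> \<longrightarrow> dist_mult f \<psi> \<le> \<epsilon>"
  proof (intro exI[of _ \<delta>] conjI ballI impI d0)
    fix \<psi> :: "('a \<Rightarrow> complex) \<Rightarrow> complex"
    assume psi: "\<psi> \<in> l1_dual" and md: "mult_defect f \<psi> \<le> \<delta>"
    obtain K where K0: "K \<ge> 0" and K: "\<And>a. a \<in> l1 \<Longrightarrow> norm (\<psi> a) \<le> K * l1_norm a"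
      using dual_bounded[OF psi] by blast
    have padd: "\<And>a b. a\<in>l1 \<Longrightarrow> b\<in>l1 \<Longrightarrow> \<psi> (\<lambda>s. a s + b s) = \<psi> a + \<psi> b"
      and phom: "\<And>a c. a\<in>l1 \<Longrightarrow> \<psi> (\<lambda>s. c * a s) = c * \<psi> a"
      using psi unfolding l1_dual_def by auto
    define dl where "dl x = (\<lambda>s. if s = x then 1 else 0 :: complex)" for x :: 'a
    define p where "p x = \<psi> (dl x)" for x
    have defect: "norm (\<psi> (conv f a b) - \<psi> a * \<psi> b) \<le> \<delta>"
      if a: "a \<in> l1" "l1_norm a \<le> 1" and b: "b \<in> l1" "l1_norm b \<le> 1" for a b
    proof -
      let ?S = "{norm (\<psi> (conv f a b) - \<psi> a * \<psi> b) | a b.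
        a \<in> l1 \<and> b \<in> l1 \<and> l1_norm a \<le> 1 \<and> l1_norm b \<le> 1}"
      have bdd: "bdd_above ?S"
      proof (rule bdd_aboveI[of _ "K + K * K"])
        fix r assume "r \<in> ?S"
        then obtain a b where r: "r = norm (\<psi> (conv f a b) - \<psi> a * \<psi> b)"
          and ab: "a \<in> l1" "b \<in> l1" "l1_norm a \<le> 1" "l1_norm b \<le> 1" by blast
        have cl: "conv f a b \<in> l1" using conv_l1(1)[OF ab(1,2)] .
        have "l1_norm (conv f a b) \<le> l1_norm a * l1_norm b" using conv_l1(2)[OF ab(1,2)] .
        also have "\<dots> \<le> 1" using ab l1_norm_nonneg[of a] l1_norm_nonneg[of b] by (simp add: mult_le_one)
        finally have c1: "l1_norm (conv f a b) \<le> 1" .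
        have n1: "norm (\<psi> (conv f a b)) \<le> K"
          using K[OF cl] mult_left_mono[OF c1 K0] by linarith
        have n2: "norm (\<psi> a) \<le> K" using K[OF ab(1)] mult_left_mono[OF ab(3) K0] by linarith
        have n3: "norm (\<psi> b) \<le> K" using K[OF ab(2)] mult_left_mono[OF ab(4) K0] by linarith
        have "norm (\<psi> a * \<psi> b) \<le> K * K" unfolding norm_mult using n2 n3 K0 by (intro mult_mono) auto
        then show "r \<le> K + K * K" unfolding r using n1 norm_triangle_ineq4[of "\<psi> (conv f a b)" "\<psi> a * \<psi> b"]
          by linarith
      qed
      have "norm (\<psi> (conv f a b) - \<psi> a * \<psi> b) \<le> Sup ?S"
        by (rule cSup_upper[OF _ bdd]) (use a b in blast)
      then show ?thesis using md unfolding mult_defect_def by linarith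
    qed
    have dlp1: "dl x \<in> l1" for x
      unfolding dl_def by (rule delta_l1)
    have dlp2: "l1_norm (dl x) \<le> 1" for x
      unfolding dl_def using delta_norm[of x] by simp
    note dlp = dlp1 dlp2
    have pxy: "norm (p (f x y) - p x * p y) \<le> \<delta>" for x y
      using defect[OF dlp1 dlp2 dlp1 dlp2, of x y] conv_delta[of f x y] unfolding p_def dl_def by simp
    define ch where "ch x = (if norm (1 - p x) \<le> 2*\<delta> then 1 else 0 :: complex)" for x
    have close: "norm (p x - ch x) \<le> 2*\<delta>" for x
    proof -
      have "norm (p x - p x * p x) \<le> \<delta>" using pxy[of x x] idem by simp
      then have "norm (p x) \<le> 2*\<delta> \<or> norm (1 - p x) \<le> 2*\<delta>" using cplx_dichot d1 by blast
      then show ?thesis unfolding ch_def by (auto simp: norm_minus_commute)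
    qed
    have chv: "ch x \<in> {0,1}" for x unfolding ch_def by auto
    have chn: "norm (ch x) \<le> 1" for x unfolding ch_def by auto
    have chm: "ch (f x y) = ch x * ch y" for x y
      by (rule chi_mult_aux[OF chv chv chv close close close pxy d1])
    have phim: "chiF ch \<in> l1_mult f" by (rule phi_mult[OF chn chm])
    define D where "D a = \<psi> a - chiF ch a" for a
    have chd: "chiF ch (dl x) = ch x" for x
    proof -
      have "chiF ch (dl x) = infsum (\<lambda>s. dl x s * ch s) {x}"
        unfolding chiF_def by (rule infsum_cong_neutral) (auto simp: dl_def)
      then show ?thesis by (simp add: dl_def)
    qed
    have phid: "chiF ch \<in> l1_dual" using phim unfolding l1_mult_def by auto
    have qadd: "\<And>a b. a\<in>l1 \<Longrightarrow> b\<in>l1 \<Longrightarrow> chiF ch (\<lambda>s. a s + b s) = chiF ch a + chiF ch b"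
      and qhom: "\<And>a c. a\<in>l1 \<Longrightarrow> chiF ch (\<lambda>s. c * a s) = c * chiF ch a"
      using phid unfolding l1_dual_def by auto
    have Dbound: "norm (D a) \<le> (2*\<delta>) * l1_norm a" if a: "a \<in> l1" for a
    proof (rule dual_pointwise_bound[where C="K + 1"])
      show "D (\<lambda>s. a s + b s) = D a + D b" if "a \<in> l1" "b \<in> l1" for a b
        using padd[OF that] qadd[OF that] unfolding D_def by simp
      show "D (\<lambda>s. c * a s) = c * D a" if "a \<in> l1" for a c
        using phom[OF that] qhom[OF that] unfolding D_def by (simp add: algebra_simps)
      show "norm (D a) \<le> (K + 1) * l1_norm a" if "a \<in> l1" for a
      proof -
        have "norm (D a) \<le> norm (\<psi> a) + norm (chiF ch a)" unfolding D_def by (rule norm_triangle_ineq4)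
        then show ?thesis using K[OF that] phi_bound[of ch a, OF chn that] by (simp add: algebra_simps)
      qed
      show "norm (D (\<lambda>s. if s = x then 1 else 0)) \<le> 2*\<delta>" for x
        using close[of x] chd[of x] unfolding D_def p_def dl_def by simp
    qed (rule a)
    have Dle: "dual_norm (\<lambda>a. \<psi> a - chiF ch a) \<le> 2*\<delta>"
    proof (rule dual_norm_props(2))
      fix a :: "'a \<Rightarrow> complex" assume a: "a \<in> l1" "l1_norm a \<le> 1"
      have "norm (D a) \<le> (2*\<delta>) * 1" using Dbound[OF a(1)] mult_left_mono[OF a(2), of "2*\<delta>"] d0 by linarith
      then show "norm (\<psi> a - chiF ch a) \<le> 2*\<delta>" unfolding D_def by simp
    qed
    let ?T = "{dual_norm (\<lambda>a. \<psi> a - \<phi> a) | \<phi>. \<phi> \<in> l1_mult f}"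
    have bdd: "bdd_below ?T"
    proof (rule bdd_belowI[of _ 0])
      fix r assume "r \<in> ?T"
      then obtain \<phi> where r: "r = dual_norm (\<lambda>a. \<psi> a - \<phi> a)" and ph: "\<phi> \<in> l1_mult f" by blast
      have "\<phi> \<in> l1_dual" using ph unfolding l1_mult_def by auto
      then obtain K2 where K2: "K2 \<ge> 0" "\<And>a. a \<in> l1 \<Longrightarrow> norm (\<phi> a) \<le> K2 * l1_norm a"
        using dual_bounded by blast
      show "0 \<le> r" unfolding r
      proof (rule dual_norm_props(1)[where K="K + K2"])
        fix a :: "'a \<Rightarrow> complex" assume a: "a \<in> l1" "l1_norm a \<le> 1"
        have "norm (\<psi> a) \<le> K" using K[OF a(1)] mult_left_mono[OF a(2) K0] by linarith
        moreover have "norm (\<phi> a) \<le> K2" using K2(2)[OF a(1)] mult_left_mono[OF a(2) K2(1)] by linarith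
        ultimately show "norm (\<psi> a - \<phi> a) \<le> K + K2"
          using norm_triangle_ineq4[of "\<psi> a" "\<phi> a"] by linarith
      qed
    qed
    have "dist_mult f \<psi> \<le> dual_norm (\<lambda>a. \<psi> a - chiF ch a)"
      unfolding dist_mult_def by (rule cInf_lower[OF _ bdd]) (use phim in blast)
    then show "dist_mult f \<psi> \<le> \<epsilon>" using Dle d2 by linarith
  qed
qed

end
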